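(* Let $\nu$ be a probability measure on $\mathcal{C}_n$. Then $$\mathbf{GW}(\{g_\nu(y):y\in\mathcal{C}_n\})\le\mathcal{D}(\nu).$$
   Context: $\mathcal{C}_n=\{-1,1\}^n$ with uniform probability measure $\mu$; $f=\log\frac{d\nu}{d\mu}$. For $y\in\mathcal{C}_n$, $i\in[n]$, let $y_\pm$ agree with $y$ except that the $i$-th coordinate is $\pm1$; then $g_\nu(y)\in\mathbb{R}^n$ has coordinates $\langle g_\nu(y),e_i\rangle=\frac{e^{f(y_+)}-e^{f(y_-)}}{e^{f(y_+)}+e^{f(y_-)}}$ (taken to be $0$ if $\nu(y_+)=\nu(y_-)=0$); equivalently $g_\nu(y)=\tanh(\nabla f(y))$ coordinatewise. Here $\partial_i f(y)=\frac12(f(y_+)-f(y_-))$, $\nabla f=(\partial_if)_i$, $\mathbf{GW}(K)=\mathbb{E}\sup_{x\in K}\langle x,\Gamma\rangle$ with $\Gamma\sim N(0,\mathrm{Id}_n)$, and $\mathcal{D}(\nu)=\mathbf{GW}(\{\nabla f(y):y\in\mathcal{C}_n\}\cup\{0\})$. *)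

theory Defs
  imports "HOL-Probability.Probability"
begin

definition cube :: "(real^'n) set" where
  "cube = {y. \<forall>i. y $ i \<in> {-1, 1}}"

text \<open>y with i-th coordinate set to s (s = 1 gives y_+, s = -1 gives y_-).\<close>
definition setc :: "real^'n \<Rightarrow> 'n \<Rightarrow> real \<Rightarrow> real^'n" where
  "setc y i s = (\<chi> j. if j = i then s else y $ j)"

text \<open>Density d nu / d mu w.r.t. the uniform probability measure mu on the cube.\<close>
definition dens :: "(real^'n) pmf \<Rightarrow> real^'n \<Rightarrow> real" where
  "dens nu y = 2 ^ CARD('n) * pmf nu y"

text \<open>f = log (d nu / d mu) (used where the density is positive).\<close>
definition logdens :: "(real^'n) pmf \<Rightarrow> real^'n \<Rightarrow> real" where
  "logdens nu y = ln (dens nu y)"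

definition g_nu :: "(real^'n) pmf \<Rightarrow> real^'n \<Rightarrow> real^'n" where
  "g_nu nu y = (\<chi> i. let a = dens nu (setc y i 1); b = dens nu (setc y i (-1)) in
       if a = 0 \<and> b = 0 then 0 else (a - b) / (a + b))"

definition grad_f :: "(real^'n) pmf \<Rightarrow> real^'n \<Rightarrow> real^'n" where
  "grad_f nu y = (\<chi> i. (logdens nu (setc y i 1) - logdens nu (setc y i (-1))) / 2)"

definition std_gauss :: "(real^'n) measure" where
  "std_gauss = distr (PiM UNIV (\<lambda>_::'n. density lborel std_normal_density)) borel
                     (\<lambda>\<omega>. \<chi> i. \<omega> i)"

definition GW :: "(real^'n) set \<Rightarrow> real" where
  "GW K = (\<integral>G. (SUP x\<in>K. x \<bullet> G) \<partial>std_gauss)"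

text \<open>If nu lacks full support then f takes the value -infinity
  at some point adjacent to a point of positive mass, so some gradient has an infinite coordinate
  and D(nu) = +infinity; otherwise it is the (finite) Gaussian width.\<close>
definition D_nu :: "(real^'n) pmf \<Rightarrow> ereal" where
  "D_nu nu = (if \<forall>y\<in>cube. pmf nu y > 0
              then ereal (GW (grad_f nu ` cube \<union> {0}))
              else \<infinity>)"

end

theory Submission
  imports Defs
begin

abbreviation "NN \<equiv> density lborel std_normal_density"

lemma NN_sym: "distr NN borel uminus = NN"
proof -
  have "distr (density (distr lborel borel uminus) (\<lambda>x. ennreal (std_normal_density x))) lborel uminus
        = density lborel ((\<lambda>x. ennreal (std_normal_density x)) \<circ> uminus)"
    by (rule distr_density_distr) auto
  moreover have "(\<lambda>x. ennreal (std_normal_density x)) \<circ> uminus = (\<lambda>x. ennreal (std_normal_density x))"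
    by (auto simp: normal_density_def)
  moreover have "distr NN lborel uminus = distr NN borel uminus"
    by (rule distr_cong) auto
  ultimately show ?thesis by (simp add: lborel_distr_uminus)
qed

lemma NN_prob: "prob_space NN"
  using prob_space_normal_density by simp

lemma NN_sym_emeasure: "A \<in> sets borel \<Longrightarrow> emeasure NN (uminus -` A) = emeasure NN A"
proof -
  assume A: "A \<in> sets borel"
  have "emeasure NN A = emeasure (distr NN borel uminus) A" by (simp add: NN_sym)
  also have "\<dots> = emeasure NN (uminus -` A)"
    using A by (subst emeasure_distr) auto
  finally show ?thesis by simp
qed

definition flipc :: "'n \<Rightarrow> ('n \<Rightarrow> real) \<Rightarrow> ('n \<Rightarrow> real)" where
  "flipc i \<omega> = fun_upd \<omega> i (- \<omega> i)"

lemma flipc_meas: "flipc i \<in> measurable (PiM UNIV (\<lambda>_::'n::finite. NN)) (PiM UNIV (\<lambda>_. NN))"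
proof -
  have "flipc i = (\<lambda>\<omega> j. (\<lambda>j \<omega>. if j = i then - \<omega> i else \<omega> j) j \<omega>)"
    by (auto simp: flipc_def fun_eq_iff)
  also have "\<dots> \<in> measurable (PiM UNIV (\<lambda>_::'n::finite. NN)) (PiM UNIV (\<lambda>_. NN))"
    by (rule measurable_PiM_single') (auto simp: space_PiM)
  finally show ?thesis .
qed

lemma PiM_flip: "distr (PiM UNIV (\<lambda>_::'n::finite. NN)) (PiM UNIV (\<lambda>_. NN)) (flipc i) = PiM UNIV (\<lambda>_. NN)"
proof -
  interpret product_prob_space "\<lambda>_::'n. NN" UNIV
    by (intro product_prob_spaceI) (simp add: NN_prob)
  show ?thesis
  proof (rule PiM_eqI)
    fix A assume A: "\<And>j. j \<in> (UNIV::'n set) \<Longrightarrow> A j \<in> sets NN"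
    define A' where "A' j = (if j = i then uminus -` A j else A j)" for j
    have pre: "flipc i -` Pi\<^sub>E UNIV A \<inter> space (PiM UNIV (\<lambda>_::'n. NN)) = Pi\<^sub>E UNIV A'"
      by (auto simp: flipc_def A'_def space_PiM PiE_def Pi_def extensional_def split: if_splits)
    have A'm: "A' j \<in> sets NN" for j
      using A measurable_sets[of "uminus::real\<Rightarrow>real" borel borel "A i"] by (auto simp: A'_def)
    have A'e: "emeasure NN (A' j) = emeasure NN (A j)" for j
      using A by (auto simp: A'_def NN_sym_emeasure)
    have PA: "Pi\<^sub>E UNIV A \<in> sets (PiM UNIV (\<lambda>_::'n. NN))"
      by (rule sets_PiM_I_finite) (use A in auto)
    have "emeasure (distr (PiM UNIV (\<lambda>_::'n. NN)) (PiM UNIV (\<lambda>_. NN)) (flipc i)) (Pi\<^sub>E UNIV A)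
        = emeasure (PiM UNIV (\<lambda>_::'n. NN)) (flipc i -` Pi\<^sub>E UNIV A \<inter> space (PiM UNIV (\<lambda>_::'n. NN)))"
      by (rule emeasure_distr[OF flipc_meas PA])
    also have "\<dots> = emeasure (PiM UNIV (\<lambda>_::'n. NN)) (Pi\<^sub>E UNIV A')"
      by (simp only: pre)
    also have "\<dots> = (\<Prod>j\<in>UNIV. emeasure NN (A' j))"
      using A'm by (intro emeasure_PiM) auto
    also have "\<dots> = (\<Prod>j\<in>UNIV. emeasure NN (A j))"
      by (simp only: A'e)
    finally show "emeasure (distr (PiM UNIV (\<lambda>_::'n. NN)) (PiM UNIV (\<lambda>_. NN)) (flipc i)) (Pi\<^sub>E UNIV A)
        = (\<Prod>j\<in>UNIV. emeasure NN (A j))" .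
  qed simp_all
qed

abbreviation "PP \<equiv> PiM UNIV (\<lambda>_::'n::finite. NN)"

lemma t1: "b \<in> (Basis::(real^'n::finite) set) \<Longrightarrow> \<exists>j. b = axis j 1" by (auto simp: Basis_vec_def)
lemma t2: "(\<lambda>\<omega>::'n::finite\<Rightarrow>real. (\<chi> i. \<omega> i) \<bullet> axis j 1) = (\<lambda>\<omega>. \<omega> j)"
      by (simp add: inner_axis)
lemma t3: "(\<lambda>\<omega>::'n::finite\<Rightarrow>real. \<omega> j) \<in> measurable PP NN"
      by (rule measurable_component_singleton) simp
lemma t4: "measurable PP NN = measurable (PP::('n::finite \<Rightarrow> real) measure) (borel::real measure)"
      by (rule measurable_cong_sets) auto

lemma vec_meas: "(\<lambda>\<omega>::'n::finite\<Rightarrow>real. \<chi> i. \<omega> i) \<in> borel_measurable PP"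
proof -
  have H: "(\<lambda>\<omega>::'n\<Rightarrow>real. (\<chi> i. \<omega> i) \<bullet> b) \<in> borel_measurable PP" if hb: "b \<in> Basis" for b
  proof -
    obtain j where b: "b = axis j 1" using t1[OF hb] by blast
    show ?thesis unfolding b t2 using t3[of j] by (simp only: t4)
  qed
  show ?thesis by (rule borel_measurable_euclidean_space[THEN iffD2]) (intro ballI H)
qed

definition Rf :: "'n::finite \<Rightarrow> real^'n \<Rightarrow> real^'n" where
  "Rf i G = (\<chi> j. if j = i then - G $ j else G $ j)"

lemma Rf_meas: "Rf (i::'n::finite) \<in> borel_measurable borel"
  unfolding Rf_def
proof (intro borel_measurable_continuous_onI continuous_on_vec_lambda)
  fix j
  show "continuous_on UNIV (\<lambda>x::real^'n. if j = i then - x $ j else x $ j)"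
  proof -
    have c: "continuous_on UNIV (\<lambda>x::real^'n. x $ j)"
      by (rule continuous_on_component[OF continuous_on_id])
    have c2: "continuous_on UNIV (\<lambda>x::real^'n. - x $ j)"
      by (rule continuous_on_minus[OF c])
    show ?thesis
      using c c2 by (cases "j = i") auto
  qed
qed

lemma gauss_sym: "distr std_gauss borel (Rf i) = (std_gauss :: (real^'n::finite) measure)"
proof -
  have "Rf i \<circ> (\<lambda>\<omega>::'n\<Rightarrow>real. \<chi> i. \<omega> i) = (\<lambda>\<omega>. \<chi> i. \<omega> i) \<circ> flipc i"
    by (auto simp: Rf_def flipc_def fun_eq_iff)
  then have "distr std_gauss borel (Rf i) = distr PP borel ((\<lambda>\<omega>::'n\<Rightarrow>real. \<chi> i. \<omega> i) \<circ> flipc i)"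
    unfolding std_gauss_def by (subst distr_distr) (auto intro: Rf_meas vec_meas)
  also have "\<dots> = distr (distr PP PP (flipc i)) borel (\<lambda>\<omega>::'n\<Rightarrow>real. \<chi> i. \<omega> i)"
    by (subst distr_distr) (auto intro: vec_meas flipc_meas)
  also have "\<dots> = std_gauss" unfolding PiM_flip std_gauss_def ..
  finally show ?thesis .
qed

lemma integrable_NN_id: "integrable NN (\<lambda>x. x)"
proof -
  have "integrable lborel (\<lambda>x. std_normal_density x * x ^ 1)"
    by (rule integrable_std_normal_moment)
  then show ?thesis
    by (subst integrable_density) auto
qed

lemma integrable_PP_comp: "integrable PP (\<lambda>\<omega>::'n::finite\<Rightarrow>real. \<omega> j)"
proof -
  have "distr PP NN (\<lambda>\<omega>::'n\<Rightarrow>real. \<omega> j) = NN"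
    by (rule distr_PiM_component) (auto simp: NN_prob)
  then have "integrable (distr PP NN (\<lambda>\<omega>::'n\<Rightarrow>real. \<omega> j)) (\<lambda>x. x)"
    using integrable_NN_id by simp
  then show ?thesis
    by (subst (asm) integrable_distr_eq) auto
qed

lemma integrable_gauss_comp: "integrable std_gauss (\<lambda>G::real^'n::finite. G $ j)"
  unfolding std_gauss_def
  by (subst integrable_distr_eq) (auto intro: vec_meas integrable_PP_comp)

lemma integrable_gauss_inner: "integrable std_gauss (\<lambda>G::real^'n::finite. u \<bullet> G)"
  unfolding inner_vec_def inner_real_def
  by (rule Bochner_Integration.integrable_sum) (intro Bochner_Integration.integrable_mult_right integrable_gauss_comp)

lemma integrable_gauss_SUP:
  fixes u :: "'a \<Rightarrow> real^'n::finite"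
  assumes "finite T" "T \<noteq> {}"
  shows "integrable std_gauss (\<lambda>G. SUP t\<in>T. u t \<bullet> G)"
  using assms
proof (induction T rule: finite_ne_induct)
  case (singleton x)
  then show ?case by (simp add: integrable_gauss_inner)
next
  case (insert x F)
  have eq: "(\<lambda>G. SUP t\<in>insert x F. u t \<bullet> G) = (\<lambda>G. max (u x \<bullet> G) (SUP t\<in>F. u t \<bullet> G))"
    using insert by (intro ext) (simp add: cSup_insert sup_max)
  show ?case unfolding eq by (intro integrable_max integrable_gauss_inner insert.IH)
qed



lemma inner_split: "(w::real^'n::finite) \<bullet> G = w$i * G$i + (\<Sum>j\<in>UNIV-{i}. w$j * G$j)"
  unfolding inner_vec_def inner_real_def by (simp add: sum.remove[of UNIV i])

lemma inner_split_R: "(w::real^'n::finite) \<bullet> Rf i G = - (w$i * G$i) + (\<Sum>j\<in>UNIV-{i}. w$j * G$j)"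
  unfolding inner_vec_def inner_real_def by (simp add: sum.remove[of UNIV i] Rf_def)

lemma SUP_pair_bound:
  fixes f g :: "'a \<Rightarrow> real"
  assumes T: "finite T" "T \<noteq> {}"
  and H: "\<And>t s. t \<in> T \<Longrightarrow> s \<in> T \<Longrightarrow> f t + g s \<le> C"
  shows "(SUP t\<in>T. f t) + (SUP s\<in>T. g s) \<le> C"
proof -
  have "(SUP s\<in>T. g s) \<le> C - f t" if "t \<in> T" for t
    using T H that by (intro cSUP_least) (auto simp: algebra_simps)
  then have "f t \<le> C - (SUP s\<in>T. g s)" if "t \<in> T" for t
    using that by fastforce
  then have "(SUP t\<in>T. f t) \<le> C - (SUP s\<in>T. g s)"
    using T by (intro cSUP_least) auto
  then show ?thesis by simp
qed

lemma SUP_upper_fin: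
  fixes f :: "'a \<Rightarrow> real"
  shows "finite T \<Longrightarrow> t \<in> T \<Longrightarrow> f t \<le> (SUP t\<in>T. f t)"
  by (intro cSUP_upper) auto


lemma contraction_pointwise:
  fixes u v :: "'a \<Rightarrow> real^'n::finite"
  assumes T: "finite T" "T \<noteq> {}"
  and same: "\<And>t j. t \<in> T \<Longrightarrow> j \<noteq> i \<Longrightarrow> u t $ j = v t $ j"
  and lip: "\<And>t s. t \<in> T \<Longrightarrow> s \<in> T \<Longrightarrow> \<bar>u t $ i - u s $ i\<bar> \<le> \<bar>v t $ i - v s $ i\<bar>"
  shows "(SUP t\<in>T. u t \<bullet> G) + (SUP t\<in>T. u t \<bullet> Rf i G)
       \<le> (SUP t\<in>T. v t \<bullet> G) + (SUP t\<in>T. v t \<bullet> Rf i G)"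
proof (rule SUP_pair_bound[OF T])
  fix t s assume ts: "t \<in> T" "s \<in> T"
  define S where "S w = (\<Sum>j\<in>UNIV-{i}. w$j * G$j)" for w :: "real^'n"
  have Su: "S (u r) = S (v r)" if "r \<in> T" for r
    unfolding S_def using same[OF that] by (intro sum.cong) auto
  have e1: "u t \<bullet> G + u s \<bullet> Rf i G = S (v t) + S (v s) + (u t $ i - u s $ i) * G $ i"
    using Su ts by (simp only: inner_split_R) (simp add: inner_split[of _ _ i] S_def algebra_simps)
  have e2: "v t \<bullet> G + v s \<bullet> Rf i G = S (v t) + S (v s) + (v t $ i - v s $ i) * G $ i"
    by (simp only: inner_split_R) (simp add: inner_split[of _ _ i] S_def algebra_simps)
  have e3: "v s \<bullet> G + v t \<bullet> Rf i G = S (v t) + S (v s) + (v s $ i - v t $ i) * G $ i"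
    by (simp only: inner_split_R) (simp add: inner_split[of _ _ i] S_def algebra_simps)
  have "(u t $ i - u s $ i) * G $ i \<le> \<bar>u t $ i - u s $ i\<bar> * \<bar>G $ i\<bar>"
    by (metis abs_ge_self abs_mult)
  also have "\<dots> \<le> \<bar>v t $ i - v s $ i\<bar> * \<bar>G $ i\<bar>"
    using lip[OF ts] by (simp add: mult_right_mono)
  also have "\<dots> = \<bar>(v t $ i - v s $ i) * G $ i\<bar>"
    by (simp add: abs_mult)
  finally have m: "(u t $ i - u s $ i) * G $ i \<le> \<bar>(v t $ i - v s $ i) * G $ i\<bar>" .
  have z: "(v s $ i - v t $ i) * G $ i = - ((v t $ i - v s $ i) * G $ i)" by (simp add: algebra_simps)
  have disj: "u t \<bullet> G + u s \<bullet> Rf i G \<le> v t \<bullet> G + v s \<bullet> Rf i G \<or>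
              u t \<bullet> G + u s \<bullet> Rf i G \<le> v s \<bullet> G + v t \<bullet> Rf i G"
  proof (cases "(v t $ i - v s $ i) * G $ i \<ge> 0")
    case True
    then have "(u t $ i - u s $ i) * G $ i \<le> (v t $ i - v s $ i) * G $ i" using m by simp
    then show ?thesis unfolding e1 e2 by simp
  next
    case False
    then have "(u t $ i - u s $ i) * G $ i \<le> (v s $ i - v t $ i) * G $ i" using m z by simp
    then show ?thesis unfolding e1 e3 by simp
  qed
  have c1: "v t \<bullet> G + v s \<bullet> Rf i G \<le> (SUP t\<in>T. v t \<bullet> G) + (SUP t\<in>T. v t \<bullet> Rf i G)"
    using ts T by (intro add_mono SUP_upper_fin) auto
  have c2: "v s \<bullet> G + v t \<bullet> Rf i G \<le> (SUP t\<in>T. v t \<bullet> G) + (SUP t\<in>T. v t \<bullet> Rf i G)"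
    using ts T by (intro add_mono SUP_upper_fin) auto
  from disj show "u t \<bullet> G + u s \<bullet> Rf i G \<le> (SUP t\<in>T. v t \<bullet> G) + (SUP t\<in>T. v t \<bullet> Rf i G)"
    using c1 c2 by linarith
qed

lemma sets_std_gauss: "sets (std_gauss :: (real^'n::finite) measure) = sets borel"
  by (simp add: std_gauss_def)

lemma Rf_meas_gauss: "Rf (i::'n::finite) \<in> measurable std_gauss borel"
  using Rf_meas measurable_cong_sets[OF sets_std_gauss refl] by blast

lemma gauss_sym_integral:
  fixes F :: "real^'n::finite \<Rightarrow> real"
  assumes F: "integrable std_gauss F"
  shows "integrable std_gauss (\<lambda>G. F (Rf i G))" "(\<integral>G. F (Rf i G) \<partial>std_gauss) = (\<integral>G. F G \<partial>std_gauss)"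
proof -
  have Fm: "F \<in> borel_measurable borel"
    using borel_measurable_integrable[OF F] measurable_cong_sets[OF sets_std_gauss refl] by blast
  have "integrable (distr std_gauss borel (Rf i)) F" using F by (simp add: gauss_sym)
  then show "integrable std_gauss (\<lambda>G. F (Rf i G))"
    by (subst (asm) integrable_distr_eq[OF Rf_meas_gauss Fm])
  have "(\<integral>G. F G \<partial>std_gauss) = (\<integral>G. F G \<partial>(distr std_gauss borel (Rf i)))" by (simp add: gauss_sym)
  also have "\<dots> = (\<integral>G. F (Rf i G) \<partial>std_gauss)"
    by (rule integral_distr[OF Rf_meas_gauss Fm])
  finally show "(\<integral>G. F (Rf i G) \<partial>std_gauss) = (\<integral>G. F G \<partial>std_gauss)" by simp
qed

lemma contraction_step:
  fixes u v :: "'a \<Rightarrow> real^'n::finite"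
  assumes T: "finite T" "T \<noteq> {}"
  and same: "\<And>t j. t \<in> T \<Longrightarrow> j \<noteq> i \<Longrightarrow> u t $ j = v t $ j"
  and lip: "\<And>t s. t \<in> T \<Longrightarrow> s \<in> T \<Longrightarrow> \<bar>u t $ i - u s $ i\<bar> \<le> \<bar>v t $ i - v s $ i\<bar>"
  shows "(\<integral>G. (SUP t\<in>T. u t \<bullet> G) \<partial>std_gauss) \<le> (\<integral>G. (SUP t\<in>T. v t \<bullet> G) \<partial>std_gauss)"
proof -
  define Fu where "Fu G = (SUP t\<in>T. u t \<bullet> G)" for G
  define Fv where "Fv G = (SUP t\<in>T. v t \<bullet> G)" for G
  have iu: "integrable std_gauss Fu" unfolding Fu_def by (rule integrable_gauss_SUP[OF T])
  have iv: "integrable std_gauss Fv" unfolding Fv_def by (rule integrable_gauss_SUP[OF T])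
  note su = gauss_sym_integral[OF iu, of i]
  note sv = gauss_sym_integral[OF iv, of i]
  have "2 * (\<integral>G. Fu G \<partial>std_gauss) = (\<integral>G. Fu G + Fu (Rf i G) \<partial>std_gauss)"
    using su iu by (simp add: Bochner_Integration.integral_add)
  also have "\<dots> \<le> (\<integral>G. Fv G + Fv (Rf i G) \<partial>std_gauss)"
  proof (rule integral_mono)
    show "integrable std_gauss (\<lambda>G. Fu G + Fu (Rf i G))"
      by (rule Bochner_Integration.integrable_add[OF iu su(1)])
    show "integrable std_gauss (\<lambda>G. Fv G + Fv (Rf i G))"
      by (rule Bochner_Integration.integrable_add[OF iv sv(1)])
    fix G
    show "Fu G + Fu (Rf i G) \<le> Fv G + Fv (Rf i G)"
      unfolding Fu_def Fv_def by (rule contraction_pointwise[OF T]) (use same lip in auto)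
  qed
  also have "\<dots> = 2 * (\<integral>G. Fv G \<partial>std_gauss)"
    using sv iv by (simp add: Bochner_Integration.integral_add)
  finally show ?thesis unfolding Fu_def Fv_def by simp
qed

lemma tanh_lip: "\<bar>tanh a - tanh b\<bar> \<le> \<bar>a - b\<bar>" for a b :: real
proof -
  have mono: "x - tanh x \<le> y - tanh y" if "x \<le> y" for x y :: real
  proof (rule DERIV_nonneg_imp_nondecreasing[OF that])
    fix z :: real
    have cz: "cosh z \<noteq> 0" using cosh_real_pos[of z] by simp
    have dt: "(tanh has_real_derivative (1 - tanh z ^ 2)) (at z)"
      using has_field_derivative_tanh[OF _ DERIV_ident, of z] cz by simp
    have "((\<lambda>x. x - tanh x) has_real_derivative (1 - (1 - tanh z ^ 2))) (at z)"
      by (intro DERIV_diff DERIV_ident dt)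
    then show "\<exists>y. ((\<lambda>x. x - tanh x) has_real_derivative y) (at z) \<and> 0 \<le> y" by fastforce
  qed
  show ?thesis
  proof (cases "a \<le> b")
    case True
    with mono[OF True] show ?thesis by (auto simp: abs_if)
  next
    case False
    then have "b \<le> a" by simp
    with mono[OF this] show ?thesis by (auto simp: abs_if)
  qed
qed

definition wS :: "'n set \<Rightarrow> ('a \<Rightarrow> real^'n) \<Rightarrow> 'a \<Rightarrow> real^'n" where
  "wS S v t = (\<chi> j. if j \<in> S then tanh (v t $ j) else v t $ j)"

lemma wS_bound:
  fixes v :: "'a \<Rightarrow> real^'n::finite"
  assumes T: "finite T" "T \<noteq> {}" and S: "finite S"
  shows "(\<integral>G. (SUP t\<in>T. wS S v t \<bullet> G) \<partial>std_gauss) \<le> (\<integral>G. (SUP t\<in>T. v t \<bullet> G) \<partial>std_gauss)"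
  using S
proof (induction S rule: finite_induct)
  case empty
  have "wS {} v = v" by (auto simp: wS_def fun_eq_iff vec_eq_iff)
  then show ?case by simp
next
  case (insert i S)
  have "(\<integral>G. (SUP t\<in>T. wS (insert i S) v t \<bullet> G) \<partial>std_gauss) \<le> (\<integral>G. (SUP t\<in>T. wS S v t \<bullet> G) \<partial>std_gauss)"
  proof (rule contraction_step[OF T, where i=i])
    fix t j assume "j \<noteq> i"
    then show "wS (insert i S) v t $ j = wS S v t $ j" by (simp add: wS_def)
  next
    fix t s
    show "\<bar>wS (insert i S) v t $ i - wS (insert i S) v s $ i\<bar> \<le> \<bar>wS S v t $ i - wS S v s $ i\<bar>"
      using insert.hyps by (simp add: wS_def tanh_lip)
  qed
  then show ?case using insert.IH by linarith
qed

lemma finite_cube: "finite (cube :: (real^'n::finite) set)"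
proof (rule finite_subset)
  show "cube \<subseteq> vec_lambda ` (PiE (UNIV::'n set) (\<lambda>_. {-1, 1::real}))"
  proof
    fix y :: "real^'n" assume "y \<in> cube"
    then have "(\<lambda>i. y $ i) \<in> PiE UNIV (\<lambda>_. {-1, 1::real})" by (auto simp: cube_def)
    moreover have "y = vec_lambda (\<lambda>i. y $ i)" by simp
    ultimately show "y \<in> vec_lambda ` (PiE (UNIV::'n set) (\<lambda>_. {-1, 1::real}))" by blast
  qed
  show "finite (vec_lambda ` (PiE (UNIV::'n set) (\<lambda>_. {-1, 1::real})))"
    by (intro finite_imageI finite_PiE) auto
qed

lemma cube_ne: "(cube :: (real^'n::finite) set) \<noteq> {}"
proof -
  have "(\<chi> i. (1::real)) \<in> (cube :: (real^'n) set)" by (simp add: cube_def)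
  then show ?thesis by blast
qed

lemma setc_cube: "y \<in> cube \<Longrightarrow> s \<in> {-1, 1} \<Longrightarrow> setc y i s \<in> cube"
  by (auto simp: cube_def setc_def)

lemma tanh_ratio: "0 < a \<Longrightarrow> 0 < b \<Longrightarrow> (a - b) / (a + b) = tanh ((ln a - ln b) / 2)"
  for a b :: real
proof -
  assume a: "0 < a" and b: "0 < b"
  have e: "- 2 * ((ln a - ln b) / 2) = ln b - ln a" by simp
  have ex: "exp (- 2 * ((ln a - ln b) / 2)) = b / a"
    by (simp only: e) (simp add: exp_diff a b)
  have h1: "1 - b / a = (a - b) / a" and h2: "1 + b / a = (a + b) / a"
    using a by (simp_all add: diff_divide_distrib add_divide_distrib)
  have "(1 - b / a) / (1 + b / a) = (a - b) / (a + b)"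
    unfolding h1 h2 using a by simp
  then show ?thesis
    unfolding tanh_real_altdef ex by simp
qed

lemma g_nu_tanh:
  assumes pos: "\<forall>y\<in>cube. pmf nu y > 0" and y: "y \<in> cube"
  shows "g_nu nu y = (\<chi> j. tanh (grad_f nu y $ j))"
proof -
  have dpos: "dens nu (setc y j s) > 0" if "s \<in> {-1, 1}" for j s
    using pos setc_cube[OF y that] by (simp add: dens_def)
  show ?thesis
    unfolding vec_eq_iff
  proof
    fix j
    have p1: "dens nu (setc y j 1) > 0" and p2: "dens nu (setc y j (-1)) > 0"
      using dpos by auto
    show "g_nu nu y $ j = (\<chi> j. tanh (grad_f nu y $ j)) $ j"
      using p1 p2 by (simp add: g_nu_def grad_f_def logdens_def Let_def tanh_ratio)
  qed
qed

theorem lemma3p4: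
  fixes nu :: "(real^'n) pmf"
  assumes "set_pmf nu \<subseteq> cube"
  shows "ereal (GW (g_nu nu ` cube)) \<le> D_nu nu"
proof (cases "\<forall>y\<in>cube. pmf nu y > 0")
  case False
  then show ?thesis by (simp only: D_nu_def if_not_P[OF False]) simp
next
  case True
  define v where "v = grad_f nu"
  have T: "finite (cube :: (real^'n) set)" "(cube :: (real^'n) set) \<noteq> {}"
    using finite_cube cube_ne by auto
  have w: "wS UNIV v y = g_nu nu y" if "y \<in> cube" for y
    using g_nu_tanh[OF True that] by (simp add: wS_def v_def)
  have "GW (g_nu nu ` cube) = (\<integral>G. (SUP y\<in>cube. g_nu nu y \<bullet> G) \<partial>std_gauss)"
    by (simp add: GW_def image_image)
  also have "\<dots> = (\<integral>G. (SUP y\<in>cube. wS UNIV v y \<bullet> G) \<partial>std_gauss)"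
    using w by (simp cong: SUP_cong)
  also have "\<dots> \<le> (\<integral>G. (SUP y\<in>cube. v y \<bullet> G) \<partial>std_gauss)"
    by (rule wS_bound[OF T]) simp
  also have "\<dots> \<le> (\<integral>G. (SUP x\<in>v ` cube \<union> {0}. x \<bullet> G) \<partial>std_gauss)"
  proof (rule integral_mono)
    show "integrable std_gauss (\<lambda>G. SUP y\<in>cube. v y \<bullet> G)"
      by (rule integrable_gauss_SUP[OF T])
    show "integrable std_gauss (\<lambda>G. SUP x\<in>v ` cube \<union> {0}. x \<bullet> G)"
      using integrable_gauss_SUP[of "v ` cube \<union> {0}" "\<lambda>x. x"] T by simp
    fix G :: "real^'n"
    have "(SUP y\<in>cube. v y \<bullet> G) = (SUP x\<in>v ` cube. x \<bullet> G)" by (simp add: image_image)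
    also have "\<dots> \<le> (SUP x\<in>v ` cube \<union> {0}. x \<bullet> G)"
      using T by (intro cSUP_subset_mono) auto
    finally show "(SUP y\<in>cube. v y \<bullet> G) \<le> (SUP x\<in>v ` cube \<union> {0}. x \<bullet> G)" .
  qed
  also have "\<dots> = GW (grad_f nu ` cube \<union> {0})"
    by (simp add: GW_def v_def)
  finally show ?thesis using True by (simp add: D_nu_def)
qed

end
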